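(* Let $n\in\mathbb{N}$ and $m\geq 3$. Then \[ \sigma'_m(n) =\frac{1}{(n-1)!} \sum_{k=1}^{n} (-1)^k (k-1)!\cdot B_{n,k} \big(1!\cdot e_{m+2,1},\ 2!\cdot e_{m+2,2},\ \dots,\ (n-k+1)!\cdot e_{m+2, n-k+1}\big). \]
   Context: The partial exponential Bell polynomials are $B_{n,k}(x_1,\dots,x_{n-k+1})=\sum \frac{n!}{j_1!\cdots j_{n-k+1}!}\prod_{i=1}^{n-k+1}\big(\frac{x_i}{i!}\big)^{j_i}$, the sum over all tuples of nonnegative integers $(j_1,\dots,j_{n-k+1})$ with $\sum_i j_i=k$ and $\sum_i i\,j_i=n$. For $m\ge3$ and $n\in\mathbb{N}$, $\sigma'_m(n)$ is the sum of the positive divisors $d$ of $n$ with $d\equiv 0$, $1$ or $m-1 \pmod m$. For $g\ge5$ and $n\in\mathbb{N}_0$, $e_{g,n}=1$ if $n=0$, $e_{g,n}=(-1)^k$ if $n=P_{g,k}$ or $n=Q_{g,k}$ for some $k\in\mathbb{N}$ (where $P_{g,k}=\frac{k((g-2)k-(g-4))}{2}$, $Q_{g,k}=\frac{k((g-2)k+(g-4))}{2}$), and $e_{g,n}=0$ otherwise. *)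

theory Defs
  imports "HOL-Analysis.Analysis"
begin

text \<open>The index tuples (j_1,...,j_{n-k+1}) are represented as functions
  j :: nat => nat that vanish outside {1..n-k+1}.\<close>
definition bell_tuples :: "nat \<Rightarrow> nat \<Rightarrow> (nat \<Rightarrow> nat) set" where
  "bell_tuples n k = {j. (\<forall>i. i \<notin> {1..n-k+1} \<longrightarrow> j i = 0)
       \<and> (\<Sum>i=1..n-k+1. j i) = k \<and> (\<Sum>i=1..n-k+1. i * j i) = n}"

definition partial_bell :: "nat \<Rightarrow> nat \<Rightarrow> (nat \<Rightarrow> real) \<Rightarrow> real" where
  "partial_bell n k x = (\<Sum>j\<in>bell_tuples n k.
      fact n / (\<Prod>i=1..n-k+1. fact (j i)) * (\<Prod>i=1..n-k+1. (x i / fact i) ^ j i))"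

definition sigma' :: "nat \<Rightarrow> nat \<Rightarrow> nat" where
  "sigma' m n = (\<Sum>d | d dvd n \<and> (d mod m = 0 \<or> d mod m = 1 \<or> d mod m = m - 1). d)"

definition P_pent :: "nat \<Rightarrow> nat \<Rightarrow> int" where
  "P_pent g k = (int k * ((int g - 2) * int k - (int g - 4))) div 2"

definition Q_pent :: "nat \<Rightarrow> nat \<Rightarrow> int" where
  "Q_pent g k = (int k * ((int g - 2) * int k + (int g - 4))) div 2"

text \<open>e_{g,n}.  For g >= 5 the numbers P_{g,k}, Q_{g,k} (k >= 1) are pairwise
  distinct, so the parity of k is well defined.\<close>
definition e_coef :: "nat \<Rightarrow> nat \<Rightarrow> int" where
  "e_coef g n = (if n = 0 then 1
     else if \<exists>k\<ge>1. int n = P_pent g k \<or> int n = Q_pent g k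
       then (-1) ^ (THE k. k \<ge> 1 \<and> (int n = P_pent g k \<or> int n = Q_pent g k))
     else 0)"

end

theory Submission imports Defs "HOL-Computational_Algebra.Formal_Power_Series" begin
unbundle no vec_syntax
unbundle fps_syntax

lemma ln_compose_deriv:
  fixes P :: "real fps"
  assumes "P$0 = 1"
  shows "fps_deriv (fps_ln 1 oo (P - 1)) = fps_deriv P * inverse P"
proof -
  have z: "(P - 1)$0 = 0" using assms by simp
  have "fps_deriv (fps_ln 1 oo (P - 1)) = (fps_deriv (fps_ln 1) oo (P - 1)) * fps_deriv (P - 1)"
    by (rule fps_compose_deriv[OF z])
  also have "fps_deriv (fps_ln 1) oo (P - 1) = inverse (1 + fps_X) oo (P - 1)"
    by (simp add: fps_ln_deriv)
  also have "\<dots> = inverse ((1 + fps_X) oo (P - 1))"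
    by (rule fps_inverse_compose[OF z]) simp
  also have "(1 + fps_X) oo (P - 1) = P"
    using z by (simp add: fps_compose_add_distrib)
  finally show ?thesis by (simp add: mult.commute)
qed

lemma ln_compose_nth:
  fixes P :: "real fps"
  shows "(fps_ln 1 oo (P - 1))$n = (\<Sum>k=1..n. (-1)^(k-1) / real k * ((P - 1)^k)$n)"
proof -
  have "(fps_ln 1 oo (P - 1))$n = (\<Sum>k=0..n. fps_ln 1 $ k * ((P - 1)^k)$n)"
    by (rule fps_compose_nth)
  also have "\<dots> = (\<Sum>k=1..n. fps_ln 1 $ k * ((P - 1)^k)$n)"
    by (rule sum.mono_neutral_right) (auto simp: Suc_le_eq)
  also have "\<dots> = (\<Sum>k=1..n. (-1)^(k-1) / real k * ((P - 1)^k)$n)"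
    by (rule sum.cong) (auto simp: fps_ln_nth)
  finally show ?thesis .
qed

lemma ln_compose_main:
  fixes P S :: "real fps"
  assumes "P$0 = 1" and "fps_X * fps_deriv P = - (P * S)" and "n \<ge> 1"
  shows "real n * (fps_ln 1 oo (P - 1))$n = - S$n"
proof -
  have P0: "P$0 \<noteq> 0" using assms by simp
  have "fps_X * fps_deriv (fps_ln 1 oo (P - 1)) = fps_X * fps_deriv P * inverse P"
    using ln_compose_deriv[OF assms(1)] by (simp add: mult.assoc)
  also have "\<dots> = - S * (P * inverse P)" using assms(2) by (simp add: algebra_simps)
  also have "P * inverse P = 1" using inverse_mult_eq_1'[OF P0] .
  finally have eq: "fps_X * fps_deriv (fps_ln 1 oo (P - 1)) = - S" by simp
  obtain n' where n': "n = Suc n'" using assms(3) by (cases n) auto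
  have "(fps_X * fps_deriv (fps_ln 1 oo (P - 1)))$n = (fps_deriv (fps_ln 1 oo (P - 1)))$n'"
    by (simp add: n')
  also have "\<dots> = real n * (fps_ln 1 oo (P - 1))$n" by (simp add: n' fps_deriv_nth)
  finally show ?thesis using eq by simp
qed

lemma power_nth_agree:
  fixes A B :: "real fps"
  assumes "A$0 = 0" "B$0 = 0" "\<And>i. i \<le> s \<Longrightarrow> A$i = B$i"
  shows "n + 1 \<le> s + k \<Longrightarrow> (A^k)$n = (B^k)$n"
proof (induction k arbitrary: n)
  case 0
  then show ?case by simp
next
  case (Suc k)
  have "(A^Suc k)$n = (\<Sum>i=0..n. A$i * (A^k)$(n - i))" by (simp add: fps_mult_nth)
  also have "\<dots> = (\<Sum>i=0..n. B$i * (B^k)$(n - i))"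
  proof (rule sum.cong[OF refl])
    fix i assume i: "i \<in> {0..n}"
    show "A$i * (A^k)$(n - i) = B$i * (B^k)$(n - i)"
    proof (cases "i = 0")
      case True then show ?thesis using assms by simp
    next
      case False
      show ?thesis
      proof (cases "i \<le> s")
        case True
        then show ?thesis using Suc False i assms(3) by auto
      next
        case False
        then have "n - i < k" using Suc.prems i by auto
        then have "(A^k)$(n-i) = 0" "(B^k)$(n-i) = 0"
          using startsby_zero_power_prefix assms(1,2) by blast+
        then show ?thesis by simp
      qed
    qed
  qed
  also have "\<dots> = (B^Suc k)$n" by (simp add: fps_mult_nth)
  finally show ?case .
qed

definition TT :: "nat \<Rightarrow> nat \<Rightarrow> nat \<Rightarrow> (nat \<Rightarrow> nat) set" where
  "TT r k n = {j. (\<forall>i. i \<notin> {1..r} \<longrightarrow> j i = 0) \<and> (\<Sum>i=1..r. j i) = k \<and> (\<Sum>i=1..r. i * j i) = n}"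

definition Hs :: "(nat \<Rightarrow> real) \<Rightarrow> nat \<Rightarrow> real fps" where
  "Hs a r = (\<Sum>i=1..r. fps_const (a i) * fps_X^i)"

definition FF :: "(nat \<Rightarrow> real) \<Rightarrow> nat \<Rightarrow> (nat \<Rightarrow> nat) \<Rightarrow> real" where
  "FF a r j = (\<Prod>i=1..r. a i ^ j i / fact (j i))"

lemma TT_finite: "finite (TT r k n)"
proof (rule finite_subset)
  show "TT r k n \<subseteq> {f. \<forall>x. (x \<in> {1..r} \<longrightarrow> f x \<in> {0..k}) \<and> (x \<notin> {1..r} \<longrightarrow> f x = 0)}"
  proof safe
    fix f x assume f: "f \<in> TT r k n" and x: "x \<in> {1..r}"
    have "f x \<le> (\<Sum>i=1..r. f i)" using x by (intro member_le_sum) auto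
    then show "f x \<in> {0..k}" using f by (auto simp: TT_def)
  qed (auto simp: TT_def)
  show "finite {f. \<forall>x. (x \<in> {1..r} \<longrightarrow> f x \<in> {0..k}) \<and> (x \<notin> {1..r} \<longrightarrow> (f x::nat) = 0)}"
    by (rule finite_set_of_finite_funs) auto
qed

lemma TT_0: "TT 0 k n = (if k = 0 \<and> n = 0 then {\<lambda>_. 0} else {})"
  by (auto simp: TT_def)

lemma sum_upd_other: "s \<notin> A \<Longrightarrow> (\<Sum>i\<in>A. g i ((f(s:=t)) i)) = (\<Sum>i\<in>A. g i (f i))"
  by (rule sum.cong) auto

lemma prod_upd_other: "s \<notin> A \<Longrightarrow> (\<Prod>i\<in>A. g i ((f(s:=t)) i)) = (\<Prod>i\<in>A. g i (f i))"
  by (rule prod.cong) auto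

lemma multinom:
  "((Hs a r)^k)$n = fact k * (\<Sum>j\<in>TT r k n. FF a r j)"
proof (induction r arbitrary: k n)
  case 0
  show ?case by (cases k) (auto simp: Hs_def TT_0 FF_def)
next
  case (Suc r)
  define s where "s = Suc r"
  define c where "c = a s"
  define A where "A = Hs a r"
  have HS: "Hs a s = fps_const c * fps_X^s + A"
    by (simp add: Hs_def A_def c_def s_def)
  have "(Hs a s)^k = (\<Sum>t\<le>k. of_nat (k choose t) * (fps_const c * fps_X^s)^t * A^(k-t))"
    unfolding HS by (rule binomial_ring)
  also have "\<dots> = (\<Sum>t=0..k. of_nat (k choose t) * (fps_const c * fps_X^s)^t * A^(k-t))"
    by (simp add: atLeast0AtMost)
  finally have "(Hs a s)^k = (\<Sum>t=0..k. of_nat (k choose t) * (fps_const c * fps_X^s)^t * A^(k-t))" .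
  hence "((Hs a s)^k)$n = (\<Sum>t=0..k. of_nat (k choose t) * c^t * (fps_X^(s*t) * A^(k-t))$n)"
    by (simp add: fps_sum_nth power_mult_distrib fps_const_power power_mult
          fps_mult_left_const_nth mult.assoc fps_of_nat[symmetric] del: of_nat_Suc)
  also have "\<dots> = (\<Sum>t=0..k. if s*t \<le> n then of_nat (k choose t) * c^t * ((A^(k-t))$(n - s*t)) else 0)"
    by (rule sum.cong) (auto simp: fps_X_power_mult_nth)
  also have "\<dots> = (\<Sum>t\<in>{t. t \<le> k \<and> s*t \<le> n}. of_nat (k choose t) * c^t * ((A^(k-t))$(n - s*t)))"
    by (subst sum.inter_filter[symmetric]) (auto intro!: sum.cong)
  also have "\<dots> = (\<Sum>t\<in>{t. t \<le> k \<and> s*t \<le> n}. fact k * (\<Sum>j\<in>TT r (k-t) (n-s*t). c^t / fact t * FF a r j))"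
  proof (rule sum.cong[OF refl])
    fix t assume t: "t \<in> {t. t \<le> k \<and> s*t \<le> n}"
    have "of_nat (k choose t) * c^t * ((A^(k-t))$(n - s*t))
          = fact k / (fact t * fact (k-t)) * c^t * (fact (k-t) * (\<Sum>j\<in>TT r (k-t) (n-s*t). FF a r j))"
      using t by (simp add: A_def Suc.IH binomial_fact)
    also have "\<dots> = fact k * (\<Sum>j\<in>TT r (k-t) (n-s*t). c^t / fact t * FF a r j)"
      by (simp add: sum_distrib_left field_simps)
    finally show "of_nat (k choose t) * c^t * ((A^(k-t))$(n - s*t)) = fact k * (\<Sum>j\<in>TT r (k-t) (n-s*t). c^t / fact t * FF a r j)" .
  qed
  also have "\<dots> = fact k * (\<Sum>(t,j)\<in>Sigma {t. t \<le> k \<and> s*t \<le> n} (\<lambda>t. TT r (k-t) (n-s*t)). c^t / fact t * FF a r j)"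
    by (simp add: sum_distrib_left[symmetric] sum.Sigma TT_finite)
  also have "(\<Sum>(t,j)\<in>Sigma {t. t \<le> k \<and> s*t \<le> n} (\<lambda>t. TT r (k-t) (n-s*t)). c^t / fact t * FF a r j)
       = (\<Sum>j\<in>TT s k n. FF a s j)"
  proof (rule sum.reindex_bij_witness[where j = "\<lambda>(t,f). f(s:=t)" and i = "\<lambda>f. (f s, f(s:=0))"])
    fix tj assume tj: "tj \<in> Sigma {t. t \<le> k \<and> s*t \<le> n} (\<lambda>t. TT r (k-t) (n-s*t))"
    obtain t f where tf: "tj = (t,f)" by (cases tj)
    have t: "t \<le> k" "s*t \<le> n" and f: "f \<in> TT r (k-t) (n-s*t)" using tj tf by auto
    have fs: "f s = 0" using f by (auto simp: TT_def s_def)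
    show "(\<lambda>f. (f s, f(s := 0))) (case tj of (t, f) \<Rightarrow> f(s := t)) = tj"
      using fs by (auto simp: tf)
    have sA: "s \<notin> {1..r}" by (simp add: s_def)
    have e1: "(\<Sum>i=1..r. (f(s:=t)) i) = (\<Sum>i=1..r. f i)" using sum_upd_other[OF sA, of "\<lambda>i x. x"] by simp
    have e2: "(\<Sum>i=1..r. i * (f(s:=t)) i) = (\<Sum>i=1..r. i * f i)" using sum_upd_other[OF sA, of "\<lambda>i x. i * x"] by simp
    show "(case tj of (t, f) \<Rightarrow> f(s := t)) \<in> TT s k n"
      using f t e1 e2 unfolding tf by (auto simp: TT_def s_def)
    have e3: "(\<Prod>i=1..r. a i ^ (f(s:=t)) i / fact ((f(s:=t)) i)) = (\<Prod>i=1..r. a i ^ f i / fact (f i))"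
      using prod_upd_other[OF sA, of "\<lambda>i x. a i ^ x / fact x"] by simp
    show "FF a s (case tj of (t, f) \<Rightarrow> f(s := t)) = (case tj of (t, j) \<Rightarrow> c ^ t / fact t * FF a r j)"
      using e3 unfolding tf by (simp add: FF_def s_def c_def)
  next
    fix f assume f: "f \<in> TT s k n"
    show "(case (f s, f(s := 0)) of (t, f) \<Rightarrow> f(s := t)) = f" by simp
    have sA: "s \<notin> {1..r}" by (simp add: s_def)
    have e1: "(\<Sum>i=1..r. (f(s:=0)) i) = (\<Sum>i=1..r. f i)" using sum_upd_other[OF sA, of "\<lambda>i x. x"] by simp
    have e2: "(\<Sum>i=1..r. i * (f(s:=0)) i) = (\<Sum>i=1..r. i * f i)" using sum_upd_other[OF sA, of "\<lambda>i x. i * x"] by simp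
    have k: "(\<Sum>i=1..r. f i) + f s = k" and n: "(\<Sum>i=1..r. i * f i) + s * f s = n"
      using f by (auto simp: TT_def s_def)
    show "(f s, f(s := 0)) \<in> Sigma {t. t \<le> k \<and> s*t \<le> n} (\<lambda>t. TT r (k-t) (n-s*t))"
      using f k n e1 e2 by (auto simp: TT_def s_def)
  qed
  finally show ?case by (simp add: s_def)
qed

definition pp :: "nat \<Rightarrow> nat \<Rightarrow> real fps" where
  "pp m L = (\<Prod>i=1..L. (1 - fps_X^(m*i)))"

fun qb :: "nat \<Rightarrow> nat \<Rightarrow> nat \<Rightarrow> real fps" where
  "qb m L 0 = 1"
| "qb m 0 (Suc k) = 0"
| "qb m (Suc L) (Suc k) = qb m L k + fps_X^(m * Suc k) * qb m L (Suc k)"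

lemma pp_0[simp]: "pp m 0 = 1" by (simp add: pp_def)

lemma pp_Suc: "pp m (Suc L) = pp m L * (1 - fps_X^(m * Suc L))"
  by (simp add: pp_def)

lemma pp_nth0: "m > 0 \<Longrightarrow> pp m L $ 0 = 1"
  by (induction L) (auto simp: pp_Suc)

lemma pp_nz: "m > 0 \<Longrightarrow> pp m L \<noteq> 0"
  using pp_nth0[of m L] by auto

lemma qb_zero: "L < k \<Longrightarrow> qb m L k = 0"
proof (induction L arbitrary: k)
  case 0 then show ?case by (cases k) auto
next
  case (Suc L)
  then obtain k' where "k = Suc k'" by (cases k) auto
  with Suc show ?case by simp
qed

lemma qb_prod: "k \<le> L \<Longrightarrow> qb m L k * pp m k * pp m (L-k) = pp m L"
proof (induction L arbitrary: k)
  case 0 then show ?case by simp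
next
  case (Suc L)
  show ?case
  proof (cases k)
    case 0 then show ?thesis by simp
  next
    case (Suc k')
    with Suc.prems have k': "k' \<le> L" by simp
    have A: "qb m L k' * pp m (Suc k') * pp m (L-k') = (1 - fps_X^(m*Suc k')) * pp m L"
      using Suc.IH[OF k'] by (simp add: pp_Suc algebra_simps)
    have B: "fps_X^(m * Suc k') * qb m L (Suc k') * pp m (Suc k') * pp m (L-k')
           = fps_X^(m*Suc k') * (1 - fps_X^(m*(L-k'))) * pp m L"
    proof (cases "k' = L")
      case True then show ?thesis by (simp add: qb_zero)
    next
      case False
      then have k2: "Suc k' \<le> L" using k' by simp
      have "L - k' = Suc (L - Suc k')" using k2 by simp
      then have eq: "pp m (L - k') = pp m (L - Suc k') * (1 - fps_X^(m*(L-k')))"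
        by (metis pp_Suc)
      have "fps_X^(m * Suc k') * qb m L (Suc k') * pp m (Suc k') * pp m (L-k')
          = fps_X^(m * Suc k') * (1 - fps_X^(m*(L-k'))) * (qb m L (Suc k') * pp m (Suc k') * pp m (L - Suc k'))"
        unfolding eq by (simp only: ac_simps)
      then show ?thesis using Suc.IH[OF k2] by simp
    qed
    have "qb m (Suc L) k * pp m k * pp m (Suc L - k)
        = qb m L k' * pp m (Suc k') * pp m (L-k') + fps_X^(m * Suc k') * qb m L (Suc k') * pp m (Suc k') * pp m (L-k')"
      by (simp add: Suc algebra_simps)
    also have "\<dots> = pp m L * (1 - fps_X^(m*Suc k') + fps_X^(m*Suc k') * (1 - fps_X^(m*(L-k'))))"
      using A B by (simp add: algebra_simps)
    also have "fps_X^(m*Suc k') * fps_X^(m*(L-k')) = (fps_X^(m * Suc L) :: real fps)"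
      using k' by (simp add: power_add[symmetric] algebra_simps)
    hence "1 - fps_X^(m*Suc k') + fps_X^(m*Suc k') * (1 - fps_X^(m*(L-k'))) = (1 - fps_X^(m * Suc L) :: real fps)"
      by (simp add: algebra_simps)
    finally show ?thesis by (simp add: pp_Suc)
  qed
qed

lemma qb_prod': "s \<le> Suc L \<Longrightarrow> qb m L s * pp m s * pp m (Suc L - s) = pp m L * (1 - fps_X^(m*(Suc L - s)))"
proof (cases "s = Suc L")
  case True then show ?thesis by (simp add: qb_zero)
next
  case False
  assume "s \<le> Suc L"
  with False have s: "s \<le> L" by simp
  then have "Suc L - s = Suc (L - s)" by simp
  then have eq: "pp m (Suc L - s) = pp m (L - s) * (1 - fps_X^(m*(Suc L - s)))" by (simp add: pp_Suc)
  have "qb m L s * pp m s * pp m (Suc L - s) = (qb m L s * pp m s * pp m (L - s)) * (1 - fps_X^(m*(Suc L - s)))"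
    unfolding eq by (simp only: ac_simps)
  then show ?thesis using qb_prod[OF s, of m] by simp
qed

lemma qb_pascalA:
  assumes m: "m > 0" and s: "1 \<le> s" "s \<le> Suc L"
  shows "qb m (Suc L) s = qb m L s + fps_X^(m*(Suc L - s)) * qb m L (s-1)"
proof -
  let ?D = "pp m s * pp m (Suc L - s)"
  have D: "?D \<noteq> 0" using pp_nz[OF m] by simp
  have l: "qb m (Suc L) s * ?D = pp m (Suc L)" using qb_prod[OF s(2), of m] by (simp add: mult.assoc)
  obtain s' where s': "s = Suc s'" using s by (cases s) auto
  have e1: "pp m s = pp m s' * (1 - fps_X^(m * s))" by (simp add: s' pp_Suc)
  have e2: "Suc L - s = L - s'" using s' by simp
  have "qb m L (s-1) * ?D = (qb m L s' * pp m s' * pp m (L - s')) * (1 - fps_X^(m * s))"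
    unfolding e1 e2 by (simp add: s' ac_simps)
  then have r2: "qb m L (s-1) * ?D = pp m L * (1 - fps_X^(m * s))"
    using qb_prod[of s' L m] s s' by simp
  have r1: "qb m L s * ?D = pp m L * (1 - fps_X^(m*(Suc L - s)))"
    using qb_prod'[OF s(2), of m] by (simp add: mult.assoc)
  have nn: "m*(Suc L - s) + m * s = m * Suc L"
    using s by (metis add_mult_distrib2 le_add_diff_inverse2)
  have ex: "fps_X^(m*(Suc L - s)) * fps_X^(m * s) = (fps_X^(m * Suc L) :: real fps)"
    by (simp only: power_add[symmetric] nn)
  have gen: "\<And>a b D P Y Z :: real fps. a * D = P * (1 - Y) \<Longrightarrow> b * D = P * (1 - Z) \<Longrightarrow>
      (a + Y * b) * D = P * (1 - Y * Z)"
  proof -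
    fix a b D P Y Z :: "real fps"
    assume h1: "a * D = P * (1 - Y)" and h2: "b * D = P * (1 - Z)"
    have "(a + Y * b) * D = a * D + Y * (b * D)" by (simp add: algebra_simps)
    also have "\<dots> = P * (1 - Y) + Y * (P * (1 - Z))" using h1 h2 by simp
    also have "\<dots> = P * (1 - Y * Z)" by (simp add: algebra_simps)
    finally show "(a + Y * b) * D = P * (1 - Y * Z)" .
  qed
  have "(qb m L s + fps_X^(m*(Suc L - s)) * qb m L (s-1)) * ?D
     = pp m L * (1 - fps_X^(m*(Suc L - s)) * fps_X^(m * s))"
    by (rule gen[OF r1 r2])
  also have "\<dots> = pp m (Suc L)" using ex by (simp add: pp_Suc)
  finally have "(qb m L s + fps_X^(m*(Suc L - s)) * qb m L (s-1)) * ?D = qb m (Suc L) s * ?D"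
    using l by simp
  then show ?thesis using D by simp
qed


definition Ei :: "nat \<Rightarrow> int \<Rightarrow> int" where
  "Ei m k = int m * (k * (k+1) div 2) - k"

lemma Ei_Suc: "Ei m (k+1) = Ei m k + int m * (k+1) - 1"
proof -
  have "(k+1)*((k+1)+1) = k*(k+1) + 2*(k+1)" by algebra
  then have "(k+1)*((k+1)+1) div 2 = k*(k+1) div 2 + (k+1)" by simp
  then show ?thesis unfolding Ei_def by (simp add: algebra_simps)
qed

lemma tri_even: "2 * (k * (k+1) div 2) = k * (k + 1::int)"
proof -
  have "even (k * (k+1))" by simp
  then show ?thesis by simp
qed

lemma Ei_ge: assumes "m \<ge> 2" shows "Ei m k \<ge> \<bar>k\<bar>"
proof -
  define T where "T = k * (k+1) div 2"
  have T2: "2 * T = k * (k+1)" unfolding T_def by (rule tri_even)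
  show ?thesis
  proof (cases "k \<ge> 0")
    case True
    have "k * (k - 1) \<ge> 0"
    proof (cases "k = 0")
      case False then have "k - 1 \<ge> 0" using True by simp
      then show ?thesis using True by simp
    qed simp
    then have "T \<ge> k" using T2 by (simp add: algebra_simps)
    moreover have "int m * T \<ge> 2 * T" using assms True \<open>T \<ge> k\<close>
      by (intro mult_right_mono) auto
    ultimately show ?thesis unfolding Ei_def T_def[symmetric] using True by simp
  next
    case False
    have "k * (k+1) \<ge> 0" using False by (simp add: mult_nonpos_nonpos)
    then have "T \<ge> 0" using T2 by simp
    then have "int m * T \<ge> 0" by simp
    then show ?thesis unfolding Ei_def T_def[symmetric] using False by simp
  qed
qed

lemma Ei_nonneg: "m \<ge> 2 \<Longrightarrow> Ei m k \<ge> 0"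
  using Ei_ge[of m k] by simp

definition cc :: "nat \<Rightarrow> int \<Rightarrow> real fps" where
  "cc m k = fps_const ((-1)^nat \<bar>k\<bar>) * fps_X^(nat (Ei m k))"

lemma sign_Suc: "(-1::real)^nat \<bar>k+1\<bar> = - ((-1)^nat \<bar>k\<bar>)"
proof (cases "k \<ge> 0")
  case True
  then have h: "nat \<bar>k+1\<bar> = Suc (nat \<bar>k\<bar>)" by simp
  show ?thesis unfolding h by simp
next
  case False
  then have h: "nat \<bar>k\<bar> = Suc (nat \<bar>k+1\<bar>)" by simp
  show ?thesis unfolding h by simp
qed

lemma cc_shift:
  assumes m: "m \<ge> 2" and e: "Ei m k + int x = Ei m (k+1) + int y"
  shows "cc m k * fps_X^x = - (cc m (k+1) * fps_X^y)"
proof -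
  have "nat (Ei m k) + x = nat (Ei m (k+1)) + y"
    using e Ei_nonneg[OF m, of k] Ei_nonneg[OF m, of "k+1"] by linarith
  then have "fps_X^(nat (Ei m k)) * fps_X^x = (fps_X^(nat (Ei m (k+1))) * fps_X^y :: real fps)"
    by (simp add: power_add[symmetric])
  then show ?thesis unfolding cc_def sign_Suc
    by (simp add: mult.assoc)
qed

definition PiJ :: "nat \<Rightarrow> nat \<Rightarrow> nat \<Rightarrow> real fps" where
  "PiJ m a b = (\<Prod>i=1..a. (1 - fps_X^(m*i - 1))) * (\<Prod>i=1..b. (1 - fps_X^(m*i - m + 1)))"

definition JT :: "nat \<Rightarrow> nat \<Rightarrow> nat \<Rightarrow> bool" where
  "JT m a b \<longleftrightarrow> PiJ m a b = (\<Sum>t=0..a+b. cc m (int t - int b) * qb m (a+b) t)"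

lemma JT_a_step:
  assumes m: "m \<ge> 2" and J: "JT m a b"
  shows "JT m (Suc a) b"
proof -
  define L where "L = a + b"
  have m0: "m > 0" using m by simp
  have P: "PiJ m (Suc a) b = PiJ m a b * (1 - fps_X^(m * Suc a - 1))"
    unfolding PiJ_def by (simp only: prod.cl_ivl_Suc) (simp add: ac_simps)
  have sh: "cc m (int t - int b) * fps_X^(m * Suc a - 1) = - (cc m (int t - int b + 1) * fps_X^(m*(L-t)))"
    if t: "t \<le> L" for t
  proof (rule cc_shift[OF m])
    have "int (m * Suc a - 1) = int m * (int a + 1) - 1" using m0 by (simp add: of_nat_diff algebra_simps)
    moreover have "int (m*(L-t)) = int m * (int a + int b - int t)" using t by (simp add: L_def of_nat_diff)
    moreover have "Ei m (int t - int b + 1) = Ei m (int t - int b) + int m * (int t - int b + 1) - 1"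
      by (rule Ei_Suc)
    ultimately show "Ei m (int t - int b) + int (m * Suc a - 1) = Ei m (int t - int b + 1) + int (m * (L - t))"
      by (simp add: algebra_simps)
  qed
  have cS: "\<And>t. cc m (int (Suc t) - int b) = cc m (int t - int b + 1)"
    by (simp add: algebra_simps)
  define S1 where "S1 = (\<Sum>t=0..L. cc m (int t - int b) * qb m L t)"
  define S2 where "S2 = (\<Sum>t=0..L. cc m (int t - int b + 1) * fps_X^(m*(L-t)) * qb m L t)"
  have J': "PiJ m a b = S1" using J unfolding JT_def S1_def L_def .
  have "PiJ m (Suc a) b = S1 - S1 * fps_X^(m * Suc a - 1)"
    unfolding P J' by (simp add: right_diff_distrib)
  also have "S1 * fps_X^(m * Suc a - 1) = (\<Sum>t=0..L. (cc m (int t - int b) * fps_X^(m * Suc a - 1)) * qb m L t)"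
    unfolding S1_def sum_distrib_right by (rule sum.cong) (simp_all only: ac_simps)
  finally have "PiJ m (Suc a) b = S1 - (\<Sum>t=0..L. (cc m (int t - int b) * fps_X^(m * Suc a - 1)) * qb m L t)" .
  also have "(\<Sum>t=0..L. (cc m (int t - int b) * fps_X^(m * Suc a - 1)) * qb m L t) = - S2"
    unfolding S2_def sum_negf[symmetric]
  proof (rule sum.cong[OF refl])
    fix t assume "t \<in> {0..L}"
    then have "t \<le> L" by simp
    show "cc m (int t - int b) * fps_X ^ (m * Suc a - 1) * qb m L t =
         - (cc m (int t - int b + 1) * fps_X ^ (m * (L - t)) * qb m L t)"
      using sh[OF \<open>t \<le> L\<close>] by (metis mult_minus_left)
  qed
  finally have LHS: "PiJ m (Suc a) b = S1 + S2" by simp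
  have S1': "S1 = cc m (- int b) + (\<Sum>t=0..L. cc m (int t - int b + 1) * qb m L (Suc t))"
  proof -
    have "(\<Sum>s=0..Suc L. cc m (int s - int b) * qb m L s) = S1"
      by (simp add: S1_def qb_zero)
    moreover have "(\<Sum>s=0..Suc L. cc m (int s - int b) * qb m L s) = cc m (- int b) + (\<Sum>t=0..L. cc m (int t - int b + 1) * qb m L (Suc t))"
      by (subst sum.atLeast0_atMost_Suc_shift) (simp only: comp_def cS, simp)
    ultimately show ?thesis by simp
  qed
  have "(\<Sum>s=0..Suc L. cc m (int s - int b) * qb m (Suc L) s)
      = cc m (- int b) + (\<Sum>t=0..L. cc m (int t - int b + 1) * qb m (Suc L) (Suc t))"
    by (subst sum.atLeast0_atMost_Suc_shift) (simp only: comp_def cS, simp)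
  also have "(\<Sum>t=0..L. cc m (int t - int b + 1) * qb m (Suc L) (Suc t))
     = (\<Sum>t=0..L. cc m (int t - int b + 1) * qb m L (Suc t)) + S2"
    unfolding S2_def sum.distrib[symmetric]
  proof (rule sum.cong[OF refl])
    fix t assume t: "t \<in> {0..L}"
    have "qb m (Suc L) (Suc t) = qb m L (Suc t) + fps_X^(m*(Suc L - Suc t)) * qb m L (Suc t - 1)"
      by (rule qb_pascalA[OF m0]) (use t in auto)
    then show "cc m (int t - int b + 1) * qb m (Suc L) (Suc t) = cc m (int t - int b + 1) * qb m L (Suc t) + cc m (int t - int b + 1) * fps_X ^ (m * (L - t)) * qb m L t"
      by (simp add: algebra_simps)
  qed
  finally have "(\<Sum>s=0..Suc L. cc m (int s - int b) * qb m (Suc L) s) = S1 + S2"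
    using S1' by simp
  then show ?thesis using LHS unfolding JT_def L_def by simp
qed

lemma JT_b_step:
  assumes m: "m \<ge> 2" and J: "JT m a b"
  shows "JT m a (Suc b)"
proof -
  define L where "L = a + b"
  have m0: "m > 0" using m by simp
  have ne: "m * Suc b - m + 1 = m * b + 1" by simp
  have P: "PiJ m a (Suc b) = PiJ m a b * (1 - fps_X^(m * b + 1))"
    unfolding PiJ_def by (simp only: prod.cl_ivl_Suc ne) (simp add: ac_simps)
  have sh: "cc m (int t - int b) * fps_X^(m * b + 1) = - (cc m (int t - int b - 1) * fps_X^(m*t))"
    if t: "t \<le> L" for t
  proof -
    have E: "Ei m (int t - int b - 1 + 1) = Ei m (int t - int b - 1) + int m * (int t - int b - 1 + 1) - 1"
      by (rule Ei_Suc)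
    have "cc m (int t - int b - 1) * fps_X^(m*t) = - (cc m (int t - int b - 1 + 1) * fps_X^(m * b + 1))"
      by (rule cc_shift[OF m]) (use E in \<open>simp add: algebra_simps\<close>)
    then show ?thesis by simp
  qed
  have cS1: "\<And>t. cc m (int (Suc t) - int b - 1) = cc m (int t - int b)"
    by (rule arg_cong[where f="cc m"]) simp
  have cS2: "\<And>t. cc m (int (Suc t) - int (Suc b)) = cc m (int t - int b)"
    by (rule arg_cong[where f="cc m"]) simp
  have c01: "cc m (int 0 - int b - 1) = cc m (- int b - 1)"
    by (rule arg_cong[where f="cc m"]) simp
  have c02: "cc m (int 0 - int (Suc b)) = cc m (- int b - 1)"
    by (rule arg_cong[where f="cc m"]) simp
  define S1 where "S1 = (\<Sum>t=0..L. cc m (int t - int b) * qb m L t)"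
  define S3 where "S3 = (\<Sum>t=0..L. cc m (int t - int b - 1) * fps_X^(m*t) * qb m L t)"
  have J': "PiJ m a b = S1" using J unfolding JT_def S1_def L_def .
  have "PiJ m a (Suc b) = S1 - S1 * fps_X^(m * b + 1)"
    unfolding P J' by (simp add: right_diff_distrib)
  also have "S1 * fps_X^(m * b + 1) = (\<Sum>t=0..L. (cc m (int t - int b) * fps_X^(m * b + 1)) * qb m L t)"
    unfolding S1_def sum_distrib_right by (rule sum.cong) (simp_all only: ac_simps)
  also have "\<dots> = - S3"
    unfolding S3_def sum_negf[symmetric]
  proof (rule sum.cong[OF refl])
    fix t assume "t \<in> {0..L}"
    then have "t \<le> L" by simp
    show "cc m (int t - int b) * fps_X ^ (m * b + 1) * qb m L t =
         - (cc m (int t - int b - 1) * fps_X ^ (m * t) * qb m L t)"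
      using sh[OF \<open>t \<le> L\<close>] by (metis mult_minus_left)
  qed
  finally have LHS: "PiJ m a (Suc b) = S1 + S3" by simp
  have S3': "S3 = cc m (- int b - 1) + (\<Sum>t=0..L. cc m (int t - int b) * fps_X^(m * Suc t) * qb m L (Suc t))"
  proof -
    have "(\<Sum>s=0..Suc L. cc m (int s - int b - 1) * fps_X^(m * s) * qb m L s) = S3"
      by (simp add: S3_def qb_zero)
    moreover have "(\<Sum>s=0..Suc L. cc m (int s - int b - 1) * fps_X^(m * s) * qb m L s)
        = cc m (- int b - 1) + (\<Sum>t=0..L. cc m (int t - int b) * fps_X^(m * Suc t) * qb m L (Suc t))"
      by (subst sum.atLeast0_atMost_Suc_shift) (simp only: comp_def cS1 c01, simp)
    ultimately show ?thesis by simp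
  qed
  have "(\<Sum>s=0..Suc L. cc m (int s - int (Suc b)) * qb m (Suc L) s)
      = cc m (- int b - 1) + (\<Sum>t=0..L. cc m (int t - int b) * (qb m L t + fps_X^(m * Suc t) * qb m L (Suc t)))"
    by (subst sum.atLeast0_atMost_Suc_shift) (simp only: comp_def cS2 c02, simp)
  also have "\<dots> = S1 + S3"
    unfolding S3' S1_def by (simp add: sum.distrib distrib_left ac_simps)
  finally have "(\<Sum>s=0..Suc L. cc m (int s - int (Suc b)) * qb m (Suc L) s) = S1 + S3" .
  then show ?thesis using LHS unfolding JT_def L_def by simp
qed

lemma JT_all: assumes m: "m \<ge> 2" shows "JT m a b"
proof (induction b)
  case 0
  show ?case
  proof (induction a)
    case 0
    show ?case by (simp add: JT_def PiJ_def cc_def Ei_def)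
  next
    case (Suc a) then show ?case by (rule JT_a_step[OF m])
  qed
next
  case (Suc b) then show ?case by (rule JT_b_step[OF m])
qed


definition sfun :: "nat \<Rightarrow> real fps" where
  "sfun j = Abs_fps (\<lambda>N. if 0 < N \<and> j dvd N then of_nat j else 0)"

lemma sfun_mult: assumes j: "j > 0" shows "(1 - fps_X^j) * sfun j = of_nat j * fps_X^j"
proof (rule fps_ext)
  fix N
  have "((1 - fps_X^j) * sfun j) $ N = sfun j $ N - (fps_X^j * sfun j) $ N"
    by (simp add: algebra_simps)
  also have "\<dots> = (of_nat j * fps_X^j :: real fps) $ N"
  proof (cases "N < j")
    case True
    then have "\<not> (0 < N \<and> j dvd N)" using j by (auto dest: dvd_imp_le)
    then show ?thesis using True by (simp add: sfun_def fps_X_power_mult_nth)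
  next
    case False
    then have NJ: "j \<le> N" by simp
    show ?thesis
    proof (cases "N = j")
      case True then show ?thesis using j by (simp add: sfun_def fps_X_power_mult_nth)
    next
      case False
      then have "N - j > 0" using NJ by simp
      moreover have "j dvd N \<longleftrightarrow> j dvd (N - j)" using NJ by (simp add: dvd_minus_self)
      ultimately show ?thesis using NJ False j
        by (simp add: sfun_def fps_X_power_mult_nth of_nat_mult[symmetric] del: of_nat_mult)
    qed
  qed
  finally show "((1 - fps_X^j) * sfun j) $ N = (of_nat j * fps_X^j :: real fps) $ N" .
qed

lemma ld_factor: assumes j: "j > 0"
  shows "fps_X * fps_deriv (1 - fps_X^j :: real fps) = - ((1 - fps_X^j) * sfun j)"
proof -
  have "fps_X * fps_deriv (1 - fps_X^j :: real fps) = - (fps_const (of_nat j) * fps_X^j)"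
  proof (rule fps_ext)
    fix N
    show "(fps_X * fps_deriv (1 - fps_X^j :: real fps)) $ N = (- (fps_const (of_nat j) * fps_X^j)) $ N"
      by (cases N) (auto simp: fps_deriv_nth)
  qed
  then have "fps_X * fps_deriv (1 - fps_X^j :: real fps) = - (of_nat j * fps_X^j)"
    by (simp add: fps_of_nat)
  then show ?thesis using sfun_mult[OF j] by simp
qed

lemma ld_mult:
  fixes f g S T :: "real fps"
  assumes "fps_X * fps_deriv f = - (f * S)" "fps_X * fps_deriv g = - (g * T)"
  shows "fps_X * fps_deriv (f * g) = - ((f * g) * (S + T))"
proof -
  have "fps_X * fps_deriv (f * g) = f * (fps_X * fps_deriv g) + (fps_X * fps_deriv f) * g"
    by (simp add: algebra_simps)
  also have "\<dots> = - ((f * g) * (S + T))" using assms by (simp add: algebra_simps)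
  finally show ?thesis .
qed

lemma ld_prod:
  assumes "finite I" "\<And>i. i \<in> I \<Longrightarrow> h i > 0"
  shows "fps_X * fps_deriv (\<Prod>i\<in>I. (1 - fps_X^(h i)) :: real fps) = - ((\<Prod>i\<in>I. (1 - fps_X^(h i))) * (\<Sum>i\<in>I. sfun (h i)))"
  using assms
proof (induction I rule: finite_induct)
  case empty then show ?case by simp
next
  case (insert x F)
  have "fps_X * fps_deriv ((1 - fps_X^(h x)) * (\<Prod>i\<in>F. (1 - fps_X^(h i))) :: real fps)
      = - (((1 - fps_X^(h x)) * (\<Prod>i\<in>F. (1 - fps_X^(h i)))) * (sfun (h x) + (\<Sum>i\<in>F. sfun (h i))))"
    by (rule ld_mult[OF ld_factor]) (use insert in auto)
  then show ?case using insert by simp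
qed

lemma sfun_nth: "n > 0 \<Longrightarrow> sfun j $ n = (if j dvd n then real j else 0)"
  by (simp add: sfun_def)


lemma pp_split: assumes "a \<le> b" shows "pp m b = pp m a * (\<Prod>i\<in>{a<..b}. (1 - fps_X^(m*i)))"
proof -
  have "{1..b} = {1..a} \<union> {a<..b}" using assms by auto
  moreover have "{1..a} \<inter> {a<..b} = {}" by auto
  ultimately show ?thesis unfolding pp_def by (simp add: prod.union_disjoint)
qed

lemma one_plus_mult:
  "((1 + fps_X^d * A) * (1 + fps_X^d * B) :: real fps) = 1 + fps_X^d * (A + B + fps_X^d * A * B)"
  by (simp add: algebra_simps)

lemma prod_one_plus:
  assumes "finite S" "\<And>i. i \<in> S \<Longrightarrow> d \<le> m*i"
  shows "\<exists>W. (\<Prod>i\<in>S. (1 - fps_X^(m*i)) :: real fps) = 1 + fps_X^d * W"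
  using assms
proof (induction S rule: finite_induct)
  case empty
  show ?case by (rule exI[of _ 0]) simp
next
  case (insert x F)
  then obtain W where W: "(\<Prod>i\<in>F. (1 - fps_X^(m*i)) :: real fps) = 1 + fps_X^d * W" by auto
  have x: "d \<le> m * x" using insert by simp
  have "(1 - fps_X^(m * x) :: real fps) = 1 + fps_X^d * (0 - fps_X^(m * x - d))"
    using x by (simp add: power_add[symmetric])
  then have "(\<Prod>i\<in>insert x F. (1 - fps_X^(m*i)) :: real fps) = (1 + fps_X^d * (0 - fps_X^(m * x - d))) * (1 + fps_X^d * W)"
    using insert W by simp
  then show ?case unfolding one_plus_mult by blast
qed

lemma Rt:
  assumes m: "m > 0" and t: "t \<le> 2*N"
  shows "\<exists>W. pp m N * qb m (2*N) t = 1 + fps_X^(m*(min t (2*N-t) + 1)) * W"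
proof -
  define u where "u = min t (2*N-t)"
  define v where "v = 2*N - u"
  have uN: "u \<le> N" and vN: "v \<le> 2*N" and uv: "u \<le> v" unfolding u_def v_def by auto
  have key: "qb m (2*N) t * (pp m u * pp m v) = pp m (2*N)"
  proof (cases "t \<le> N")
    case True
    then have "u = t" "v = 2*N - t" unfolding u_def v_def by auto
    then show ?thesis using qb_prod[OF t, of m] by (simp add: ac_simps)
  next
    case False
    then have "u = 2*N - t" "v = t" unfolding u_def v_def using t by auto
    then show ?thesis using qb_prod[OF t, of m] by (simp add: ac_simps)
  qed
  define Q1 where "Q1 = (\<Prod>i\<in>{u<..N}. (1 - fps_X^(m*i)) :: real fps)"
  define Q2 where "Q2 = (\<Prod>i\<in>{v<..2*N}. (1 - fps_X^(m*i)) :: real fps)"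
  have p1: "pp m N = pp m u * Q1" unfolding Q1_def by (rule pp_split[OF uN])
  have p2: "pp m (2*N) = pp m v * Q2" unfolding Q2_def by (rule pp_split[OF vN])
  have "(pp m N * qb m (2*N) t) * (pp m u * pp m v) = (Q1 * Q2) * (pp m u * pp m v)"
  proof -
    have "(pp m N * qb m (2*N) t) * (pp m u * pp m v) = pp m N * (qb m (2*N) t * (pp m u * pp m v))"
      by (simp only: ac_simps)
    also have "\<dots> = (pp m u * Q1) * (pp m v * Q2)" unfolding key p2 p1 ..
    finally show ?thesis by (simp only: ac_simps)
  qed
  moreover have "pp m u * pp m v \<noteq> 0" using pp_nz[OF m] by simp
  ultimately have eq: "pp m N * qb m (2*N) t = Q1 * Q2" by simp
  have le1: "\<And>i. u < i \<Longrightarrow> m*(u+1) \<le> m*i" by (intro mult_le_mono2) auto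
  have "\<exists>W. Q1 = 1 + fps_X^(m*(u+1)) * W"
    unfolding Q1_def
  proof (rule prod_one_plus)
    fix i assume "i \<in> {u<..N}" then show "m*(u+1) \<le> m*i" by (intro le1) auto
  qed simp
  then obtain W1 where W1: "Q1 = 1 + fps_X^(m*(u+1)) * W1" by blast
  have "\<exists>W. Q2 = 1 + fps_X^(m*(u+1)) * W"
    unfolding Q2_def
  proof (rule prod_one_plus)
    fix i assume "i \<in> {v<..2*N}" then show "m*(u+1) \<le> m*i" using uv by (intro le1) auto
  qed simp
  then obtain W2 where W2: "Q2 = 1 + fps_X^(m*(u+1)) * W2" by blast
  show ?thesis unfolding eq W1 W2 one_plus_mult u_def[symmetric] by blast
qed

lemma cc_absorb:
  assumes m: "m \<ge> 2" and t: "t \<le> 2*N"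
  shows "\<exists>Z. cc m (int t - int N) * fps_X^(m*(min t (2*N-t) + 1)) = fps_X^(N+1) * Z"
proof -
  define k where "k = int t - int N"
  have "Ei m k \<ge> \<bar>k\<bar>" by (rule Ei_ge[OF m])
  moreover have "\<bar>k\<bar> = int N - int (min t (2*N-t))" unfolding k_def using t by auto
  ultimately have a: "nat (Ei m k) \<ge> N - min t (2*N-t)" by linarith
  have b0: "1*(min t (2*N-t) + 1) \<le> m*(min t (2*N-t) + 1)" by (rule mult_le_mono1) (use m in simp)
  then have b: "m*(min t (2*N-t) + 1) \<ge> min t (2*N-t) + 1" by simp
  have c: "min t (2*N-t) \<le> N" by simp
  from a b c have ge: "nat (Ei m k) + m*(min t (2*N-t) + 1) \<ge> N + 1" by linarith
  define r where "r = nat (Ei m k) + m*(min t (2*N-t) + 1) - (N+1)"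
  have e: "nat (Ei m k) + m*(min t (2*N-t) + 1) = (N+1) + r" using ge unfolding r_def by linarith
  have "cc m k * fps_X^(m*(min t (2*N-t) + 1)) = fps_const ((-1)^nat \<bar>k\<bar>) * (fps_X^(nat (Ei m k)) * fps_X^(m*(min t (2*N-t) + 1)))"
    by (simp only: cc_def mult.assoc)
  also have "\<dots> = fps_const ((-1)^nat \<bar>k\<bar>) * fps_X^((N+1) + r)"
    by (simp only: power_add[symmetric] e)
  also have "\<dots> = fps_X^(N+1) * (fps_const ((-1)^nat \<bar>k\<bar>) * fps_X^r)"
    by (simp only: power_add mult.left_commute)
  finally have "cc m k * fps_X^(m*(min t (2*N-t) + 1)) = fps_X^(N+1) * (fps_const ((-1)^nat \<bar>k\<bar>) * fps_X^r)" .
  then show ?thesis unfolding k_def by blast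
qed


lemma Ptot_trunc:
  assumes m: "m \<ge> 2"
  shows "\<exists>W. pp m N * PiJ m N N = (\<Sum>t=0..2*N. cc m (int t - int N)) + fps_X^(N+1) * W"
proof -
  have m0: "m > 0" using m by simp
  have J: "PiJ m N N = (\<Sum>t=0..2*N. cc m (int t - int N) * qb m (2*N) t)"
    using JT_all[OF m, of N N] unfolding JT_def by (simp add: mult_2)
  have "\<forall>t\<in>{0..2*N}. \<exists>Z. pp m N * (cc m (int t - int N) * qb m (2*N) t) = cc m (int t - int N) + fps_X^(N+1) * Z"
  proof
    fix t assume "t \<in> {0..2*N}"
    then have t: "t \<le> 2*N" by simp
    obtain W where W: "pp m N * qb m (2*N) t = 1 + fps_X^(m*(min t (2*N-t) + 1)) * W"
      using Rt[OF m0 t] by blast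
    obtain Z where Z: "cc m (int t - int N) * fps_X^(m*(min t (2*N-t) + 1)) = fps_X^(N+1) * Z"
      using cc_absorb[OF m t] by blast
    have "pp m N * (cc m (int t - int N) * qb m (2*N) t) = cc m (int t - int N) * (pp m N * qb m (2*N) t)"
      by (simp only: ac_simps)
    also have "\<dots> = cc m (int t - int N) + (cc m (int t - int N) * fps_X^(m*(min t (2*N-t) + 1))) * W"
      unfolding W by (simp add: algebra_simps)
    also have "\<dots> = cc m (int t - int N) + fps_X^(N+1) * (Z * W)"
      unfolding Z by (simp only: mult.assoc)
    finally show "\<exists>Z. pp m N * (cc m (int t - int N) * qb m (2*N) t) = cc m (int t - int N) + fps_X^(N+1) * Z"
      by blast
  qed
  then obtain Zf where Zf: "\<And>t. t \<in> {0..2*N} \<Longrightarrow> pp m N * (cc m (int t - int N) * qb m (2*N) t) = cc m (int t - int N) + fps_X^(N+1) * Zf t"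
    by metis
  have "pp m N * PiJ m N N = (\<Sum>t=0..2*N. pp m N * (cc m (int t - int N) * qb m (2*N) t))"
    unfolding J by (simp add: sum_distrib_left)
  also have "\<dots> = (\<Sum>t=0..2*N. cc m (int t - int N) + fps_X^(N+1) * Zf t)"
    by (rule sum.cong[OF refl]) (rule Zf)
  also have "\<dots> = (\<Sum>t=0..2*N. cc m (int t - int N)) + fps_X^(N+1) * (\<Sum>t=0..2*N. Zf t)"
    by (simp add: sum.distrib sum_distrib_left)
  finally show ?thesis by blast
qed

lemma Ptot_nth:
  assumes m: "m \<ge> 2" and i: "i \<le> N"
  shows "(pp m N * PiJ m N N) $ i = (\<Sum>t=0..2*N. cc m (int t - int N)) $ i"
proof -
  obtain W where W: "pp m N * PiJ m N N = (\<Sum>t=0..2*N. cc m (int t - int N)) + fps_X^(N+1) * W"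
    using Ptot_trunc[OF m] by blast
  have "(fps_X^(N+1) * W) $ i = 0" using i by (simp only: fps_X_power_mult_nth) simp
  then show ?thesis unfolding W fps_add_nth by simp
qed

lemma Ei_inj: assumes m: "m \<ge> 3" and e: "Ei m a = Ei m b" shows "a = b"
proof (rule ccontr)
  assume ne: "a \<noteq> b"
  have "2 * Ei m a = int m * (a * (a+1)) - 2 * a" unfolding Ei_def using tri_even[of a] by (simp add: algebra_simps)
  moreover have "2 * Ei m b = int m * (b * (b+1)) - 2 * b" unfolding Ei_def using tri_even[of b] by (simp add: algebra_simps)
  ultimately have "int m * (a * (a+1)) - 2 * a = int m * (b * (b+1)) - 2 * b" using e by simp
  then have "(a - b) * (int m * (a + b + 1) - 2) = 0" by (simp add: algebra_simps)
  then have h: "int m * (a + b + 1) = 2" using ne by simp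
  show False
  proof (cases "a + b + 1 \<ge> 1")
    case True
    then have "int m * (a + b + 1) \<ge> int m * 1" by (intro mult_left_mono) auto
    then show False using h m by simp
  next
    case False
    then have "a + b + 1 \<le> 0" by simp
    then have "int m * (a + b + 1) \<le> 0" by (simp add: mult_nonneg_nonpos)
    then show False using h by simp
  qed
qed

lemma cc_nth: assumes m: "m \<ge> 2"
  shows "(cc m k) $ i = (if Ei m k = int i then (-1)^nat \<bar>k\<bar> else 0)"
  using Ei_nonneg[OF m, of k] unfolding cc_def by auto

definition ealt :: "nat \<Rightarrow> nat \<Rightarrow> int" where
  "ealt m i = (if \<exists>k. Ei m k = int i then (-1)^nat \<bar>THE k. Ei m k = int i\<bar> else 0)"

lemma ealt_eq: assumes m: "m \<ge> 3" and k: "Ei m k = int i" shows "ealt m i = (-1)^nat \<bar>k\<bar>"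
proof -
  have "(THE k. Ei m k = int i) = k"
    by (rule the_equality) (use k Ei_inj[OF m] in auto)
  then show ?thesis unfolding ealt_def using k by auto
qed

lemma sumcc_nth:
  assumes m: "m \<ge> 3" and i: "i \<le> N"
  shows "(\<Sum>t=0..2*N. cc m (int t - int N)) $ i = real_of_int (ealt m i)"
proof (cases "\<exists>k. Ei m k = int i")
  case True
  then obtain k where k: "Ei m k = int i" by blast
  have m2: "m \<ge> 2" using m by simp
  have kb: "\<bar>k\<bar> \<le> int N" using Ei_ge[OF m2, of k] k i by simp
  define t0 where "t0 = nat (k + int N)"
  have t0: "t0 \<in> {0..2*N}" unfolding t0_def using kb by auto
  have "(\<Sum>t=0..2*N. cc m (int t - int N)) $ i = (\<Sum>t=0..2*N. (cc m (int t - int N)) $ i)"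
    by (simp add: fps_sum_nth)
  also have "\<dots> = (\<Sum>t=0..2*N. if t = t0 then (-1)^nat \<bar>k\<bar> else 0)"
  proof (rule sum.cong[OF refl])
    fix t assume "t \<in> {0..2*N}"
    have "Ei m (int t - int N) = int i \<longleftrightarrow> int t - int N = k"
      using Ei_inj[OF m, of "int t - int N" k] k by auto
    also have "\<dots> \<longleftrightarrow> t = t0" unfolding t0_def using kb by auto
    finally show "(cc m (int t - int N)) $ i = (if t = t0 then (-1)^nat \<bar>k\<bar> else 0)"
      unfolding cc_nth[OF m2] using kb t0_def by auto
  qed
  also have "\<dots> = (-1)^nat \<bar>k\<bar>" using t0 by simp
  finally show ?thesis using ealt_eq[OF m k] by simp
next
  case False
  have m2: "m \<ge> 2" using m by simp
  have "(\<Sum>t=0..2*N. cc m (int t - int N)) $ i = (\<Sum>t=0..2*N. (cc m (int t - int N)) $ i)"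
    by (simp add: fps_sum_nth)
  also have "\<dots> = 0" using False by (simp add: cc_nth[OF m2])
  finally show ?thesis using False by (simp add: ealt_def)
qed

lemma Q_pent_Ei: "Q_pent (m+2) k = Ei m (int k)"
proof -
  have "2 * Ei m (int k) = int k * (int m * int k + (int m - 2))"
    unfolding Ei_def using tri_even[of "int k"] by (simp add: algebra_simps)
  moreover have "Q_pent (m+2) k = (int k * (int m * int k + (int m - 2))) div 2"
    unfolding Q_pent_def by simp
  ultimately show ?thesis by (metis nonzero_mult_div_cancel_left zero_neq_numeral)
qed

lemma P_pent_Ei: "P_pent (m+2) k = Ei m (- int k)"
proof -
  have "2 * Ei m (- int k) = int k * (int m * int k - (int m - 2))"
    unfolding Ei_def using tri_even[of "- int k"] by (simp add: algebra_simps)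
  moreover have "P_pent (m+2) k = (int k * (int m * int k - (int m - 2))) div 2"
    unfolding P_pent_def by simp
  ultimately show ?thesis by (metis nonzero_mult_div_cancel_left zero_neq_numeral)
qed

lemma ecoef_alt: assumes m: "m \<ge> 3" shows "e_coef (m+2) i = ealt m i"
proof (cases "i = 0")
  case True
  have "Ei m 0 = int i" using True by (simp add: Ei_def)
  then show ?thesis using ealt_eq[OF m] True by (simp add: e_coef_def)
next
  case False
  have E0: "Ei m 0 = 0" by (simp add: Ei_def)
  show ?thesis
  proof (cases "\<exists>k. Ei m k = int i")
    case True
    then obtain k where k: "Ei m k = int i" by blast
    have k0: "k \<noteq> 0" using k E0 False by auto
    define k' where "k' = nat \<bar>k\<bar>"
    have k'1: "k' \<ge> 1" using k0 unfolding k'_def by simp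
    have kk: "k = int k' \<or> k = - int k'" unfolding k'_def by auto
    have ex: "\<exists>j\<ge>1. int i = P_pent (m+2) j \<or> int i = Q_pent (m+2) j"
      using k'1 kk k P_pent_Ei[of m k'] Q_pent_Ei[of m k'] by auto
    have th: "(THE j. j \<ge> 1 \<and> (int i = P_pent (m+2) j \<or> int i = Q_pent (m+2) j)) = k'"
    proof (rule the_equality)
      show "k' \<ge> 1 \<and> (int i = P_pent (m+2) k' \<or> int i = Q_pent (m+2) k')"
        using k'1 kk k P_pent_Ei[of m k'] Q_pent_Ei[of m k'] by auto
    next
      fix j assume j: "j \<ge> 1 \<and> (int i = P_pent (m+2) j \<or> int i = Q_pent (m+2) j)"
      then have "Ei m (- int j) = Ei m k \<or> Ei m (int j) = Ei m k" using k P_pent_Ei[of m j] Q_pent_Ei[of m j] by auto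
      then have "- int j = k \<or> int j = k" using Ei_inj[OF m] by blast
      then show "j = k'" unfolding k'_def by auto
    qed
    have "e_coef (m+2) i = (-1)^k'" unfolding e_coef_def using False ex th by simp
    then show ?thesis using ealt_eq[OF m k] k'_def by simp
  next
    case nE: False
    have "\<not> (\<exists>j\<ge>1. int i = P_pent (m+2) j \<or> int i = Q_pent (m+2) j)"
      using nE P_pent_Ei[of m] Q_pent_Ei[of m] by metis
    then show ?thesis using False nE unfolding e_coef_def ealt_def by auto
  qed
qed


lemma mod_f2: fixes m i :: nat assumes "m \<ge> 2" "i \<ge> 1" shows "(m*i - 1) mod m = m - 1"
proof -
  obtain i' where i': "i = Suc i'" using assms by (cases i) auto
  have e: "m*i - 1 = (m - 1) + m*i'" using assms unfolding i' by simp
  have "((m - 1) + m*i') mod m = (m - 1) mod m" by (rule mod_mult_self2)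
  then show ?thesis unfolding e using assms by simp
qed

lemma mod_f3: fixes m i :: nat assumes "m \<ge> 2" "i \<ge> 1" shows "(m*i - m + 1) mod m = 1"
proof -
  obtain i' where i': "i = Suc i'" using assms by (cases i) auto
  have e: "m*i - m + 1 = 1 + m*i'" using assms unfolding i' by simp
  have "(1 + m*i') mod m = 1 mod m" by (rule mod_mult_self2)
  then show ?thesis unfolding e using assms by simp
qed

lemma sigma_sum:
  assumes m: "m \<ge> 3" and n: "n \<ge> 1"
  shows "(\<Sum>i=1..n. (\<lambda>d. if d dvd n then real d else 0) (m*i))
       + ((\<Sum>i=1..n. (\<lambda>d. if d dvd n then real d else 0) (m*i - 1))
       + (\<Sum>i=1..n. (\<lambda>d. if d dvd n then real d else 0) (m*i - m + 1))) = real (sigma' m n)"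
proof -
  define g where "g = (\<lambda>d. if d dvd n then real d else 0)"
  define f1 where "f1 = (\<lambda>i. m*i)"
  define f2 where "f2 = (\<lambda>i. m*i - 1)"
  define f3 where "f3 = (\<lambda>i. m*i - m + 1)"
  have m2: "m \<ge> 2" using m by simp
  have i1: "inj_on f1 {1..n}" unfolding f1_def inj_on_def using m by auto
  have i2: "inj_on f2 {1..n}" unfolding f2_def inj_on_def
  proof (intro ballI impI)
    fix x y assume x: "x \<in> {1..n}" and y: "y \<in> {1..n}" and e: "m*x - 1 = m*y - 1"
    have "m*x \<ge> 1" "m*y \<ge> 1" using x y m by auto
    then have "m*x = m*y" using e by linarith
    then show "x = y" using m by simp
  qed
  have i3: "inj_on f3 {1..n}" unfolding f3_def inj_on_def
  proof (intro ballI impI)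
    fix x y assume x: "x \<in> {1..n}" and y: "y \<in> {1..n}" and e: "m*x - m + 1 = m*y - m + 1"
    have "m*x \<ge> m" "m*y \<ge> m" using x y by auto
    then have "m*x = m*y" using e by linarith
    then show "x = y" using m by simp
  qed
  have md1: "\<And>i. i \<in> {1..n} \<Longrightarrow> f1 i mod m = 0" unfolding f1_def by simp
  have md2: "\<And>i. i \<in> {1..n} \<Longrightarrow> f2 i mod m = m - 1" unfolding f2_def using mod_f2[OF m2] by simp
  have md3: "\<And>i. i \<in> {1..n} \<Longrightarrow> f3 i mod m = 1" unfolding f3_def using mod_f3[OF m2] by simp
  have d12: "f1 ` {1..n} \<inter> f2 ` {1..n} = {}" using md1 md2 m by force
  have d13: "f1 ` {1..n} \<inter> f3 ` {1..n} = {}" using md1 md3 m by force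
  have d23: "f2 ` {1..n} \<inter> f3 ` {1..n} = {}" using md2 md3 m by force
  define U where "U = f1 ` {1..n} \<union> (f2 ` {1..n} \<union> f3 ` {1..n})"
  have "(\<Sum>i=1..n. g (f1 i)) + ((\<Sum>i=1..n. g (f2 i)) + (\<Sum>i=1..n. g (f3 i)))
      = sum g (f1 ` {1..n}) + (sum g (f2 ` {1..n}) + sum g (f3 ` {1..n}))"
    using sum.reindex[OF i1, of g] sum.reindex[OF i2, of g] sum.reindex[OF i3, of g] by simp
  also have "\<dots> = sum g U"
    unfolding U_def using d12 d13 d23 by (simp add: sum.union_disjoint Int_Un_distrib)
  also have "\<dots> = (\<Sum>d\<in>{d\<in>U. d dvd n}. real d)"
    unfolding g_def by (rule sum.inter_filter[symmetric]) (simp add: U_def)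
  also have "{d\<in>U. d dvd n} = {d. d dvd n \<and> (d mod m = 0 \<or> d mod m = 1 \<or> d mod m = m - 1)}"
  proof (intro set_eqI iffI)
    fix d assume "d \<in> {d\<in>U. d dvd n}"
    then show "d \<in> {d. d dvd n \<and> (d mod m = 0 \<or> d mod m = 1 \<or> d mod m = m - 1)}"
      unfolding U_def using md1 md2 md3 by auto
  next
    fix d assume d: "d \<in> {d. d dvd n \<and> (d mod m = 0 \<or> d mod m = 1 \<or> d mod m = m - 1)}"
    then have dn: "d dvd n" by simp
    then have d1: "d \<ge> 1" and dle: "d \<le> n" using n by (auto intro: dvd_imp_le Nat.gr0I)
    define q where "q = d div m"
    have dq: "d = m*q + d mod m" unfolding q_def by simp
    have "d \<in> U"
    proof -
      consider "d mod m = 0" | "d mod m = 1" | "d mod m = m - 1" using d by auto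
      then show ?thesis
      proof cases
        case 1
        then have "d = f1 q" using dq unfolding f1_def by simp
        moreover have "q \<ge> 1" using d1 dq 1 by (cases q) auto
        moreover have "q \<le> n"
        proof -
          have "q \<le> m*q" using m by simp
          then show ?thesis using dq 1 dle by linarith
        qed
        ultimately show ?thesis unfolding U_def by auto
      next
        case 2
        have "d = f3 (q+1)" using dq 2 unfolding f3_def by simp
        moreover have "q + 1 \<le> n"
        proof -
          have "q \<le> m*q" using m by simp
          then show ?thesis using dq 2 dle by linarith
        qed
        ultimately show ?thesis unfolding U_def by auto
      next
        case 3
        have "d = m*(q+1) - 1" using dq 3 m by simp
        then have "d = f2 (q+1)" unfolding f2_def by simp
        moreover have "q + 1 \<le> n"
        proof -
          have "q \<le> m*q" using m by simp
          then show ?thesis using dq 3 dle m by linarith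
        qed
        ultimately show ?thesis unfolding U_def by auto
      qed
    qed
    then show "d \<in> {d\<in>U. d dvd n}" using dn by simp
  qed
  also have "(\<Sum>d\<in>{d. d dvd n \<and> (d mod m = 0 \<or> d mod m = 1 \<or> d mod m = m - 1)}. real d) = real (sigma' m n)"
    unfolding sigma'_def by simp
  finally show ?thesis unfolding g_def f1_def f2_def f3_def .
qed


lemma Hs_nth: "Hs a r $ j = (if 1 \<le> j \<and> j \<le> r then a j else 0)"
proof -
  have "Hs a r $ j = (\<Sum>k\<in>{1..r}. if k = j then a k else 0)"
    unfolding Hs_def fps_sum_nth by (rule sum.cong) auto
  also have "\<dots> = (if j \<in> {1..r} then a j else 0)" using sum.delta[of "{1..r}" j a] by simp
  finally show ?thesis by simp
qed

lemma bell_eq: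
  fixes P :: "real fps" and e :: "nat \<Rightarrow> real"
  assumes k: "1 \<le> k" "k \<le> n" and P0: "P$0 = 1" and Pi: "\<And>i. 1 \<le> i \<Longrightarrow> i \<le> n \<Longrightarrow> P$i = e i"
  shows "partial_bell n k (\<lambda>i. fact i * e i) = fact n / fact k * ((P - 1)^k)$n"
proof -
  define r where "r = n - k + 1"
  have bt: "bell_tuples n k = TT r k n" unfolding bell_tuples_def TT_def r_def by simp
  have "partial_bell n k (\<lambda>i. fact i * e i) = fact n * (\<Sum>j\<in>TT r k n. FF e r j)"
    unfolding partial_bell_def bt sum_distrib_left r_def[symmetric]
  proof (rule sum.cong[OF refl])
    fix j
    have "(\<Prod>i=1..r. (fact i * e i / fact i) ^ j i) = (\<Prod>i=1..r. e i ^ j i)"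
      by (rule prod.cong) auto
    then show "fact n / (\<Prod>i=1..r. fact (j i)) * (\<Prod>i=1..r. (fact i * e i / fact i) ^ j i) = fact n * FF e r j"
      unfolding FF_def by (simp add: prod_dividef)
  qed
  also have "\<dots> = fact n / fact k * ((Hs e r)^k)$n"
    unfolding multinom by simp
  also have "((Hs e r)^k)$n = ((P - 1)^k)$n"
  proof (rule power_nth_agree[where s = r])
    show "Hs e r $ 0 = 0" by (simp add: Hs_nth)
    show "(P - 1) $ 0 = 0" using P0 by simp
    fix i assume i: "i \<le> r"
    show "Hs e r $ i = (P - 1) $ i"
    proof (cases "i = 0")
      case True then show ?thesis using P0 by (simp add: Hs_nth)
    next
      case False
      then have "1 \<le> i" "i \<le> n" using i k unfolding r_def by auto
      then show ?thesis using i Pi by (simp add: Hs_nth)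
    qed
  next
    show "n + 1 \<le> r + k" using k unfolding r_def by simp
  qed
  finally show ?thesis .
qed

lemma alg_helper: "a \<noteq> 0 \<Longrightarrow> b \<noteq> 0 \<Longrightarrow> K \<noteq> 0 \<Longrightarrow>
   1 / b * (s * a * (N * b / (K * a) * c)) = s * N / K * (c::real)"
  by (simp add: field_simps)

lemma term_alg:
  fixes c :: real
  assumes "1 \<le> k" "1 \<le> n"
  shows "1 / fact (n - 1) * ((-1) ^ k * fact (k - 1) * (fact n / fact k * c))
       = - (real n * ((-1)^(k-1) / real k * c))"
proof -
  obtain k' where k': "k = Suc k'" using assms by (cases k) auto
  obtain n' where n': "n = Suc n'" using assms by (cases n) auto
  have "1 / fact (n - 1) * ((-1) ^ k * fact (k - 1) * (fact n / fact k * c))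
     = 1 / fact n' * ((-1) ^ k * fact k' * (real n * fact n' / (real k * fact k') * c))"
    unfolding k' n' by (simp only: fact_Suc diff_Suc_1 of_nat_Suc)
  also have "\<dots> = (-1)^k * real n / real k * c"
    by (rule alg_helper) (auto simp: k')
  also have "\<dots> = - (real n * ((-1)^(k-1) / real k * c))"
    unfolding k' by simp
  finally show ?thesis .
qed

theorem corollary3p1:
  fixes n m :: nat
  assumes "n \<ge> 1" and "m \<ge> 3"
  shows "real (sigma' m n) =
    1 / fact (n - 1) * (\<Sum>k=1..n. (-1) ^ k * fact (k - 1) *
       partial_bell n k (\<lambda>i. fact i * real_of_int (e_coef (m + 2) i)))"
proof -
  have n1: "n \<ge> 1" and m3: "m \<ge> 3" using assms by auto
  have m2: "m \<ge> 2" using m3 by simp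
  define e where "e = (\<lambda>i. real_of_int (e_coef (m + 2) i))"
  define P where "P = pp m n * PiJ m n n"
  have Pn: "P$i = e i" if i: "i \<le> n" for i
  proof -
    have "P$i = (\<Sum>t=0..2*n. cc m (int t - int n)) $ i" unfolding P_def by (rule Ptot_nth[OF m2 i])
    also have "\<dots> = real_of_int (ealt m i)" by (rule sumcc_nth[OF m3 i])
    also have "\<dots> = e i" unfolding e_def ecoef_alt[OF m3] ..
    finally show ?thesis .
  qed
  have P0: "P$0 = 1" using Pn[of 0] by (simp add: e_def e_coef_def)
  define S where "S = (\<Sum>i=1..n. sfun (m*i)) + ((\<Sum>i=1..n. sfun (m*i - 1)) + (\<Sum>i=1..n. sfun (m*i - m + 1)))"
  have LD: "fps_X * fps_deriv P = - (P * S)"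
  proof -
    have l1: "fps_X * fps_deriv (pp m n) = - (pp m n * (\<Sum>i=1..n. sfun (m*i)))"
      unfolding pp_def by (rule ld_prod) (use m3 in auto)
    have l2: "fps_X * fps_deriv (\<Prod>i=1..n. (1 - fps_X^(m*i - 1)) :: real fps) = - ((\<Prod>i=1..n. (1 - fps_X^(m*i - 1))) * (\<Sum>i=1..n. sfun (m*i - 1)))"
    proof (rule ld_prod)
      fix i assume "i \<in> {1..n}"
      then have "m * i \<ge> 3 * 1" using m3 by (intro mult_le_mono) auto
      then show "m*i - 1 > 0" by simp
    qed simp
    have l3: "fps_X * fps_deriv (\<Prod>i=1..n. (1 - fps_X^(m*i - m + 1)) :: real fps) = - ((\<Prod>i=1..n. (1 - fps_X^(m*i - m + 1))) * (\<Sum>i=1..n. sfun (m*i - m + 1)))"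
      by (rule ld_prod) auto
    have "fps_X * fps_deriv (pp m n * ((\<Prod>i=1..n. (1 - fps_X^(m*i - 1))) * (\<Prod>i=1..n. (1 - fps_X^(m*i - m + 1)))))
       = - ((pp m n * ((\<Prod>i=1..n. (1 - fps_X^(m*i - 1))) * (\<Prod>i=1..n. (1 - fps_X^(m*i - m + 1))))) * S)"
      unfolding S_def by (rule ld_mult[OF l1 ld_mult[OF l2 l3]])
    then show ?thesis unfolding P_def PiJ_def .
  qed
  have Sn: "S$n = real (sigma' m n)"
  proof -
    have npos: "n > 0" using n1 by simp
    have "S$n = (\<Sum>i=1..n. (\<lambda>d. if d dvd n then real d else 0) (m*i))
       + ((\<Sum>i=1..n. (\<lambda>d. if d dvd n then real d else 0) (m*i - 1))
       + (\<Sum>i=1..n. (\<lambda>d. if d dvd n then real d else 0) (m*i - m + 1)))"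
      unfolding S_def fps_add_nth fps_sum_nth sfun_nth[of n, OF npos] by (rule refl)
    also have "\<dots> = real (sigma' m n)" by (rule sigma_sum[OF m3 n1])
    finally show ?thesis .
  qed
  have "1 / fact (n - 1) * (\<Sum>k=1..n. (-1) ^ k * fact (k - 1) * partial_bell n k (\<lambda>i. fact i * e i))
      = 1 / fact (n - 1) * (\<Sum>k=1..n. (-1) ^ k * fact (k - 1) * (fact n / fact k * ((P - 1)^k)$n))"
    by (intro arg_cong[where f = "\<lambda>x. 1 / fact (n - 1) * x"] sum.cong refl)
       (simp add: bell_eq[OF _ _ P0 Pn])
  also have "\<dots> = (\<Sum>k=1..n. - (real n * ((-1)^(k-1) / real k * ((P - 1)^k)$n)))"
    unfolding sum_distrib_left by (rule sum.cong[OF refl]) (rule term_alg, use n1 in auto)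
  also have "\<dots> = - (real n * (fps_ln 1 oo (P - 1))$n)"
    unfolding ln_compose_nth by (simp add: sum_negf sum_distrib_left)
  also have "\<dots> = S$n" using ln_compose_main[OF P0 LD n1] by simp
  finally show ?thesis unfolding Sn e_def by simp
qed

end
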